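(* Let $\mathcal{D}$ be a distribution on $\mathbb{R}^d$ with finite second moments, $f:\mathbb{R}^d\to\{0,1\}$ with $\Pr_{\mathcal{D}}[f=a]>0$ for $a\in\{0,1\}$, $q\ge2$, $1\le k\le q-1$, and for $a\in\{0,1\}$ let $\mathbf{X}_a$ denote $\mathbf{X}\sim\mathcal{D}$ conditioned on $f(\mathbf{X})=a$. Then the bag and pair covariance matrices of $\mathrm{Ex}(f,\mathcal{D},q,k)$ satisfy $$\boldsymbol{\Sigma}_D=2\boldsymbol{\Sigma}_B+\frac{2}{q-1}\frac kq\Big(1-\frac kq\Big)(\mathbb{E}[\mathbf{X}_1]-\mathbb{E}[\mathbf{X}_0])(\mathbb{E}[\mathbf{X}_1]-\mathbb{E}[\mathbf{X}_0])^{\mathsf T}.$$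
   Context: The bag oracle $\mathrm{Ex}(f,\mathcal{D},q,k)$ returns a bag of $q$ independent points, $k$ drawn from $\mathcal{D}$ conditioned on $f=1$ and $q-k$ from $\mathcal{D}$ conditioned on $f=0$. $\boldsymbol{\Sigma}_B:=\mathrm{Var}[\mathbf{X}]$ where $\mathbf{X}$ is a uniformly random point of a random bag; $\boldsymbol{\Sigma}_D:=\mathbb{E}[\mathbf{Z}\mathbf{Z}^{\mathsf T}]$ where $\mathbf{Z}=\mathbf{X}'_1-\mathbf{X}'_2$ for a uniformly random pair drawn without replacement from a random bag. *)

theory Defs
  imports "HOL-Probability.Probability"
begin

definition cond_dist :: "(real^'d) measure \<Rightarrow> (real^'d \<Rightarrow> nat) \<Rightarrow> nat \<Rightarrow> (real^'d) measure"
  where "cond_dist D f a = uniform_measure D {x \<in> space D. f x = a}"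

definition cond_mean :: "(real^'d) measure \<Rightarrow> (real^'d \<Rightarrow> nat) \<Rightarrow> nat \<Rightarrow> real^'d"
  where "cond_mean D f a = (\<chi> i. \<integral>x. x $ i \<partial>(cond_dist D f a))"

definition bag_oracle :: "(real^'d) measure \<Rightarrow> (real^'d \<Rightarrow> nat) \<Rightarrow> nat \<Rightarrow> nat \<Rightarrow> (nat \<Rightarrow> real^'d) measure"
  where "bag_oracle D f q k =
     (\<Pi>\<^sub>M i\<in>{..<q}. (if i < k then cond_dist D f 1 else cond_dist D f 0))"

definition bag_point_space :: "(real^'d) measure \<Rightarrow> (real^'d \<Rightarrow> nat) \<Rightarrow> nat \<Rightarrow> nat \<Rightarrow> ((nat \<Rightarrow> real^'d) \<times> nat) measure"
  where "bag_point_space D f q k = bag_oracle D f q k \<Otimes>\<^sub>M uniform_count_measure {..<q}"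

definition bag_pair_space :: "(real^'d) measure \<Rightarrow> (real^'d \<Rightarrow> nat) \<Rightarrow> nat \<Rightarrow> nat \<Rightarrow> ((nat \<Rightarrow> real^'d) \<times> (nat \<times> nat)) measure"
  where "bag_pair_space D f q k = bag_oracle D f q k \<Otimes>\<^sub>M
           uniform_count_measure {(s, t). s < q \<and> t < q \<and> s \<noteq> t}"

definition Sigma_B :: "(real^'d) measure \<Rightarrow> (real^'d \<Rightarrow> nat) \<Rightarrow> nat \<Rightarrow> nat \<Rightarrow> real^'d^'d"
  where "Sigma_B D f q k =
    (let M = bag_point_space D f q k;
         X = (\<lambda>(b, t). b t);
         m = (\<chi> i. \<integral>\<omega>. X \<omega> $ i \<partial>M)
     in (\<chi> i j. \<integral>\<omega>. (X \<omega> $ i - m $ i) * (X \<omega> $ j - m $ j) \<partial>M))"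

definition Sigma_D :: "(real^'d) measure \<Rightarrow> (real^'d \<Rightarrow> nat) \<Rightarrow> nat \<Rightarrow> nat \<Rightarrow> real^'d^'d"
  where "Sigma_D D f q k =
    (let M = bag_pair_space D f q k;
         Z = (\<lambda>(b, (s, t)). b s - b t)
     in (\<chi> i j. \<integral>\<omega>. Z \<omega> $ i * Z \<omega> $ j \<partial>M))"

definition outer :: "real^'d \<Rightarrow> real^'d \<Rightarrow> real^'d^'d"
  where "outer u v = (\<chi> i j. u $ i * v $ j)"

end

theory Submission
  imports Defs
begin

lemma meas_idx:
  fixes h :: "'b \<Rightarrow> 'a \<Rightarrow> real"
  assumes "finite A" "\<And>a. a \<in> A \<Longrightarrow> h a \<in> borel_measurable M"
  shows "(\<lambda>\<omega>. h (snd \<omega>) (fst \<omega>)) \<in> borel_measurable (M \<Otimes>\<^sub>M uniform_count_measure A)"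
proof (rule measurable_compose_countable'[where I=A])
  show "(\<lambda>\<omega>. h a (fst \<omega>)) \<in> borel_measurable (M \<Otimes>\<^sub>M uniform_count_measure A)" if "a \<in> A" for a
    using assms(2)[OF that] by measurable
  show "snd \<in> measurable (M \<Otimes>\<^sub>M uniform_count_measure A) (count_space A)"
    using measurable_snd[of M "uniform_count_measure A"]
    by (simp add: measurable_cong_sets sets_uniform_count_measure_count_space)
  show "countable A" using assms(1) by (simp add: countable_finite)
qed

lemma LU:
  fixes G :: "'a \<Rightarrow> 'b \<Rightarrow> real"
  assumes P: "prob_space M" and A: "finite A" "A \<noteq> {}"
    and int: "\<And>t. t \<in> A \<Longrightarrow> integrable M (\<lambda>x. G x t)"
  shows "integrable (M \<Otimes>\<^sub>M uniform_count_measure A) (\<lambda>\<omega>. G (fst \<omega>) (snd \<omega>))"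
    and "(\<integral>\<omega>. G (fst \<omega>) (snd \<omega>) \<partial>(M \<Otimes>\<^sub>M uniform_count_measure A)) = (\<Sum>t\<in>A. \<integral>x. G x t \<partial>M) / card A"
proof -
  interpret U: prob_space "uniform_count_measure A" using A by (rule prob_space_uniform_count_measure)
  interpret M: prob_space M by (rule P)
  interpret pair_sigma_finite M "uniform_count_measure A" by unfold_locales
  have meas: "(\<lambda>\<omega>. G (fst \<omega>) (snd \<omega>)) \<in> borel_measurable (M \<Otimes>\<^sub>M uniform_count_measure A)"
    using meas_idx[of A "\<lambda>t x. G x t" M] A int by (auto intro: borel_measurable_integrable)
  show I: "integrable (M \<Otimes>\<^sub>M uniform_count_measure A) (\<lambda>\<omega>. G (fst \<omega>) (snd \<omega>))"
  proof (rule Fubini_integrable[OF meas])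
    show "integrable M (\<lambda>x. \<integral>y. norm (G (fst (x, y)) (snd (x, y))) \<partial>uniform_count_measure A)"
      using A int by (simp add: integral_uniform_count_measure)
    show "AE x in M. integrable (uniform_count_measure A) (\<lambda>y. G (fst (x, y)) (snd (x, y)))"
      using A by (simp add: uniform_count_measure_def integrable_point_measure_finite)
  qed
  have "(\<integral>y. (\<integral>x. G x y \<partial>M) \<partial>uniform_count_measure A) = integral\<^sup>L (M \<Otimes>\<^sub>M uniform_count_measure A) (case_prod G)"
    by (rule integral_snd) (use I in \<open>simp add: case_prod_beta'\<close>)
  then show "(\<integral>\<omega>. G (fst \<omega>) (snd \<omega>) \<partial>(M \<Otimes>\<^sub>M uniform_count_measure A)) = (\<Sum>t\<in>A. \<integral>x. G x t \<partial>M) / card A"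
    using A by (simp add: integral_uniform_count_measure case_prod_beta')
qed

lemma absprod: "\<bar>(a::real) * b\<bar> \<le> a\<^sup>2 + b\<^sup>2"
proof -
  have "0 \<le> (\<bar>a\<bar> - \<bar>b\<bar>)\<^sup>2" by simp
  then have "2 * (\<bar>a\<bar> * \<bar>b\<bar>) \<le> a\<^sup>2 + b\<^sup>2" by (simp add: power2_diff)
  moreover have "0 \<le> \<bar>a\<bar> * \<bar>b\<bar>" by simp
  ultimately have "\<bar>a\<bar> * \<bar>b\<bar> \<le> a\<^sup>2 + b\<^sup>2" by linarith
  then show ?thesis by (simp add: abs_mult)
qed
lemma absone: "\<bar>a::real\<bar> \<le> 1 + a\<^sup>2"
proof -
  have "0 \<le> (\<bar>a\<bar> - 1)\<^sup>2" by simp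
  then have "2 * \<bar>a\<bar> \<le> 1 + a\<^sup>2" by (simp add: power2_diff)
  then show ?thesis by simp
qed

lemma sif: fixes x y :: real assumes "k \<le> q"
  shows "(\<Sum>t<q. if t < k then x else y) = real k * x + (real q - real k) * y"
proof -
  have u: "{..<q} = {..<k} \<union> {k..<q}" using assms by auto
  have "(\<Sum>t<q. if t < k then x else y) = (\<Sum>t<k. if t < k then x else y) + (\<Sum>t\<in>{k..<q}. if t < k then x else y)"
    unfolding u by (rule sum.union_disjoint) auto
  also have "\<dots> = (\<Sum>t<k. x) + (\<Sum>t\<in>{k..<q}. y)" by (intro arg_cong2[where f="(+)"] sum.cong) auto
  finally show ?thesis using assms by (simp add: of_nat_diff)
qed

lemma alg:
  fixes S1 S0 a1 a0 b1 b0 :: real and q k :: nat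
  assumes q2: "q \<ge> 2" and k1: "1 \<le> k" and kq: "k \<le> q - 1"
  defines "ss \<equiv> \<lambda>t. if t < k then S1 else S0"
    and "m \<equiv> \<lambda>t. if t < k then a1 else a0"
    and "n \<equiv> \<lambda>t. if t < k then b1 else b0"
  shows "(\<Sum>s<q. \<Sum>t\<in>{..<q} - {s}. ss s + ss t - m s * n t - m t * n s) / (real q * (real q - 1))
    = 2 * ((\<Sum>t<q. ss t - ((\<Sum>t<q. n t) / q) * m t - ((\<Sum>t<q. m t) / q) * n t
                  + ((\<Sum>t<q. m t) / q) * ((\<Sum>t<q. n t) / q)) / q)
      + ((2 / (real q - 1)) * (real k / real q) * (1 - real k / real q)) * ((a1 - a0) * (b1 - b0))"
proof -
  have kq': "k \<le> q" using kq by simp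
  have SS: "(\<Sum>t<q. ss t) = real k * S1 + (real q - real k) * S0" unfolding ss_def by (rule sif[OF kq'])
  have MM: "(\<Sum>t<q. m t) = real k * a1 + (real q - real k) * a0" unfolding m_def by (rule sif[OF kq'])
  have NN: "(\<Sum>t<q. n t) = real k * b1 + (real q - real k) * b0" unfolding n_def by (rule sif[OF kq'])
  have R: "(\<Sum>t<q. m t * n t) = real k * (a1 * b1) + (real q - real k) * (a0 * b0)"
  proof -
    have "(\<Sum>t<q. m t * n t) = (\<Sum>t<q. if t < k then a1 * b1 else a0 * b0)"
      by (rule sum.cong) (auto simp: m_def n_def)
    then show ?thesis using sif[OF kq'] by simp
  qed
  have inner: "(\<Sum>t\<in>{..<q} - {s}. ss s + ss t - m s * n t - m t * n s)
      = (real q - 2) * ss s + (\<Sum>t<q. ss t) - m s * (\<Sum>t<q. n t) - (\<Sum>t<q. m t) * n s + 2 * (m s * n s)"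
    if "s < q" for s
  proof -
    have "(\<Sum>t\<in>{..<q} - {s}. ss s + ss t - m s * n t - m t * n s)
       = (\<Sum>t<q. ss s + ss t - m s * n t - m t * n s) - (ss s + ss s - m s * n s - m s * n s)"
      using that by (simp add: sum_diff1)
    also have "(\<Sum>t<q. ss s + ss t - m s * n t - m t * n s) = real q * ss s + (\<Sum>t<q. ss t) - m s * (\<Sum>t<q. n t) - (\<Sum>t<q. m t) * n s"
      by (simp add: sum.distrib sum_subtractf sum_distrib_left sum_distrib_right)
    finally show ?thesis by (simp add: algebra_simps)
  qed
  have L: "(\<Sum>s<q. \<Sum>t\<in>{..<q} - {s}. ss s + ss t - m s * n t - m t * n s)
     = (real q - 2) * (\<Sum>t<q. ss t) + real q * (\<Sum>t<q. ss t) - 2 * ((\<Sum>t<q. m t) * (\<Sum>t<q. n t)) + 2 * (\<Sum>t<q. m t * n t)"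
  proof -
    have "(\<Sum>s<q. \<Sum>t\<in>{..<q} - {s}. ss s + ss t - m s * n t - m t * n s)
      = (\<Sum>s<q. (real q - 2) * ss s + (\<Sum>t<q. ss t) - m s * (\<Sum>t<q. n t) - (\<Sum>t<q. m t) * n s + 2 * (m s * n s))"
      by (rule sum.cong) (simp_all add: inner)
    also have "\<dots> = (real q - 2) * (\<Sum>t<q. ss t) + real q * (\<Sum>t<q. ss t) - 2 * ((\<Sum>t<q. m t) * (\<Sum>t<q. n t)) + 2 * (\<Sum>t<q. m t * n t)"
      by (simp add: sum.distrib sum_subtractf sum_distrib_left[symmetric] sum_distrib_right[symmetric] algebra_simps) (simp add: sum_distrib_left mult_ac)
    finally show ?thesis .
  qed
  have Rt: "(\<Sum>t<q. ss t - ((\<Sum>t<q. n t) / q) * m t - ((\<Sum>t<q. m t) / q) * n t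
                  + ((\<Sum>t<q. m t) / q) * ((\<Sum>t<q. n t) / q))
       = (\<Sum>t<q. ss t) - ((\<Sum>t<q. n t) / q) * (\<Sum>t<q. m t) - ((\<Sum>t<q. m t) / q) * (\<Sum>t<q. n t)
          + real q * (((\<Sum>t<q. m t) / q) * ((\<Sum>t<q. n t) / q))"
    by (simp add: sum.distrib sum_subtractf sum_distrib_left sum_distrib_right)
  have qpos: "real q - 1 > 0" "real q > 0" using q2 by auto
  show ?thesis
    unfolding L Rt unfolding SS MM NN R using qpos
    by (simp add: field_simps)
qed

locale L9 =
  fixes D :: "(real^'d) measure" and f :: "real^'d \<Rightarrow> nat" and q k :: nat
  assumes P: "prob_space D" and sD: "sets D = sets borel"
    and sq: "\<And>i. integrable D (\<lambda>x. (x $ i)\<^sup>2)"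
    and f01: "\<And>x. f x \<in> {0, 1}"
    and fm: "\<And>a. {x \<in> space D. f x = a} \<in> sets D"
    and fpos: "\<And>a. a \<in> {0, 1} \<Longrightarrow> measure D {x \<in> space D. f x = a} > 0"
    and q2: "q \<ge> 2" and k1: "1 \<le> k" and kq: "k \<le> q - 1"
begin

interpretation D: prob_space D by (rule P)

lemma cd_prob: "a \<in> {0,1} \<Longrightarrow> prob_space (cond_dist D f a)"
  unfolding cond_dist_def
  by (rule prob_space_uniform_measure)
     (use fpos[of a] in \<open>auto simp: D.emeasure_eq_measure\<close>)

lemma sets_cd[measurable_cong]: "sets (cond_dist D f a) = sets borel"
  by (simp add: cond_dist_def sD)

lemma cd_density: assumes "a \<in> {0,1}" shows "cond_dist D f a =
   density D (\<lambda>x. ennreal (indicator {x \<in> space D. f x = a} x / measure D {x \<in> space D. f x = a}))"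
proof -
  let ?S = "{x \<in> space D. f x = a}"
  have [measurable]: "?S \<in> sets D" by (rule fm)
  have m: "measure D ?S > 0" using fpos[OF assms] .
  show ?thesis
  unfolding cond_dist_def uniform_measure_def
  proof (rule density_cong)
    show "(\<lambda>x. indicator ?S x / emeasure D ?S) \<in> borel_measurable D" by measurable
    show "(\<lambda>x. ennreal (indicator ?S x / measure D ?S)) \<in> borel_measurable D" by measurable
    show "AE x in D. indicator ?S x / emeasure D ?S = ennreal (indicator ?S x / measure D ?S)"
    proof (rule AE_I2)
      fix x show "indicator ?S x / emeasure D ?S = ennreal (indicator ?S x / measure D ?S)"
        using m divide_ennreal[of 1 "measure D ?S"]
        by (cases "x \<in> ?S") (simp_all add: D.emeasure_eq_measure)
    qed
  qed
qed

lemma cd_int: assumes "a \<in> {0,1}" "integrable D h" shows "integrable (cond_dist D f a) (h :: _ \<Rightarrow> real)"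
proof -
  let ?S = "{x \<in> space D. f x = a}"
  have [measurable]: "?S \<in> sets D" by (rule fm)
  have hm[measurable]: "h \<in> borel_measurable D" using assms(2) by auto
  have "integrable D (\<lambda>x. h x * indicator ?S x / measure D ?S)"
    by (intro integrable_divide integrable_real_mult_indicator assms(2)) simp
  moreover have "(\<lambda>x. h x * indicator ?S x / measure D ?S) = (\<lambda>x. indicator ?S x / measure D ?S * h x)"
    by (simp add: fun_eq_iff)
  ultimately show ?thesis
    unfolding cd_density[OF assms(1)]
    by (subst integrable_real_density) auto
qed


lemma D_int2: "integrable D (\<lambda>x. x $ i * x $ j)"
proof (rule Bochner_Integration.integrable_bound)
  show "integrable D (\<lambda>x. (x $ i)\<^sup>2 + (x $ j)\<^sup>2)" by (intro Bochner_Integration.integrable_add sq)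
  show "(\<lambda>x. x $ i * x $ j) \<in> borel_measurable D" by (subst measurable_cong_sets[OF sD refl]) measurable
  show "AE x in D. norm (x $ i * x $ j) \<le> norm ((x $ i)\<^sup>2 + (x $ j)\<^sup>2)"
  proof (rule AE_I2)
    fix x :: "real^'d"
    have "\<bar>x $ i * x $ j\<bar> \<le> (x $ i)\<^sup>2 + (x $ j)\<^sup>2"
      by (rule absprod)
    then show "norm (x $ i * x $ j) \<le> norm ((x $ i)\<^sup>2 + (x $ j)\<^sup>2)" by simp
  qed
qed

lemma D_int1: "integrable D (\<lambda>x. x $ i)"
proof (rule Bochner_Integration.integrable_bound)
  show "integrable D (\<lambda>x. 1 + (x $ i)\<^sup>2)" by (intro Bochner_Integration.integrable_add sq D.integrable_const)
  show "(\<lambda>x. x $ i) \<in> borel_measurable D" by (subst measurable_cong_sets[OF sD refl]) measurable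
  show "AE x in D. norm (x $ i) \<le> norm (1 + (x $ i)\<^sup>2)"
  proof (rule AE_I2)
    fix x :: "real^'d"
    have "\<bar>x $ i\<bar> \<le> 1 + (x $ i)\<^sup>2"
      by (rule absone)
    then show "norm (x $ i) \<le> norm (1 + (x $ i)\<^sup>2)" by simp
  qed
qed

definition "Mt t = (if t < k then cond_dist D f 1 else cond_dist D f 0)"

lemma Mt_prob: "prob_space (Mt t)" by (simp add: Mt_def cd_prob)
lemma Mt_int: "integrable D h \<Longrightarrow> integrable (Mt t) (h :: _ \<Rightarrow> real)" by (simp add: Mt_def cd_int)
lemma sets_Mt: "sets (Mt t) = sets borel" by (simp add: Mt_def sets_cd)
lemma Mt_one: "integrable (Mt t) (\<lambda>_. 1::real)"
  using Mt_prob[of t] by (simp add: prob_space_def finite_measure.integrable_const)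

interpretation MP: product_prob_space Mt "{..<q}"
  by (simp add: product_prob_space_def product_prob_space_axioms_def product_sigma_finite_def
      Mt_prob prob_space_imp_sigma_finite)

lemma E1:
  fixes g :: "real^'d \<Rightarrow> real"
  assumes t: "t < q" and g: "integrable (Mt t) g"
  shows "integrable (Pi\<^sub>M {..<q} Mt) (\<lambda>b. g (b t))"
    and "(\<integral>b. g (b t) \<partial>Pi\<^sub>M {..<q} Mt) = (\<integral>x. g x \<partial>Mt t)"
proof -
  let ?F = "\<lambda>u x. if u = t then g x else 1"
  have i: "\<And>u. u \<in> {..<q} \<Longrightarrow> integrable (Mt u) (?F u)"
    by (case_tac "u = t") (simp_all add: g Mt_one)
  have e: "\<And>b. (\<Prod>u\<in>{..<q}. ?F u (b u)) = g (b t)" using t by simp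
  show "integrable (Pi\<^sub>M {..<q} Mt) (\<lambda>b. g (b t))"
  proof -
    have "integrable (Pi\<^sub>M {..<q} Mt) (\<lambda>b. \<Prod>u\<in>{..<q}. ?F u (b u))"
      by (rule MP.product_integrable_prod[OF finite_lessThan]) (rule i)
    then show ?thesis by (simp only: e)
  qed
  show "(\<integral>b. g (b t) \<partial>Pi\<^sub>M {..<q} Mt) = (\<integral>x. g x \<partial>Mt t)"
  proof -
    have "(\<integral>b. (\<Prod>u\<in>{..<q}. ?F u (b u)) \<partial>Pi\<^sub>M {..<q} Mt) = (\<Prod>u\<in>{..<q}. integral\<^sup>L (Mt u) (?F u))"
      by (rule MP.product_integral_prod[OF finite_lessThan]) (rule i)
    also have "\<dots> = (\<Prod>u\<in>{..<q}. if u = t then integral\<^sup>L (Mt t) g else 1)"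
      by (rule prod.cong) (auto simp: prob_space.prob_space[OF Mt_prob])
    also have "\<dots> = integral\<^sup>L (Mt t) g" using t by simp
    finally show ?thesis by (simp only: e)
  qed
qed

lemma E2:
  fixes g h :: "real^'d \<Rightarrow> real"
  assumes s: "s < q" and t: "t < q" and st: "s \<noteq> t"
    and g: "integrable (Mt s) g" and h: "integrable (Mt t) h"
  shows "integrable (Pi\<^sub>M {..<q} Mt) (\<lambda>b. g (b s) * h (b t))"
    and "(\<integral>b. g (b s) * h (b t) \<partial>Pi\<^sub>M {..<q} Mt) = (\<integral>x. g x \<partial>Mt s) * (\<integral>x. h x \<partial>Mt t)"
proof -
  let ?F = "\<lambda>u x. if u = s then g x else if u = t then h x else 1"
  have i: "\<And>u. u \<in> {..<q} \<Longrightarrow> integrable (Mt u) (?F u)"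
    using st by (case_tac "u = s"; case_tac "u = t") (simp_all add: g h Mt_one)
  have e: "(\<Prod>u\<in>{..<q}. ?F u (b u)) = g (b s) * h (b t)" for b
  proof -
    have "(\<Prod>u\<in>{..<q}. ?F u (b u)) = ?F s (b s) * (\<Prod>u\<in>{..<q} - {s}. ?F u (b u))"
      using s by (simp add: prod.remove)
    also have "(\<Prod>u\<in>{..<q} - {s}. ?F u (b u)) = (\<Prod>u\<in>{..<q} - {s}. if u = t then h (b u) else 1)"
      by (rule prod.cong) auto
    also have "\<dots> = h (b t)" using t st by (simp add: prod.delta)
    finally show ?thesis by simp
  qed
  have e2: "(\<Prod>u\<in>{..<q}. integral\<^sup>L (Mt u) (?F u)) = (\<integral>x. g x \<partial>Mt s) * (\<integral>x. h x \<partial>Mt t)"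
  proof -
    have "(\<Prod>u\<in>{..<q}. integral\<^sup>L (Mt u) (?F u)) = integral\<^sup>L (Mt s) (?F s) * (\<Prod>u\<in>{..<q} - {s}. integral\<^sup>L (Mt u) (?F u))"
      using s by (simp add: prod.remove)
    also have "(\<Prod>u\<in>{..<q} - {s}. integral\<^sup>L (Mt u) (?F u)) = (\<Prod>u\<in>{..<q} - {s}. if u = t then integral\<^sup>L (Mt t) h else 1)"
      by (rule prod.cong) (auto simp: prob_space.prob_space[OF Mt_prob])
    also have "\<dots> = integral\<^sup>L (Mt t) h" using t st by (simp add: prod.delta)
    finally show ?thesis by simp
  qed
  show "integrable (Pi\<^sub>M {..<q} Mt) (\<lambda>b. g (b s) * h (b t))"
  proof -
    have "integrable (Pi\<^sub>M {..<q} Mt) (\<lambda>b. \<Prod>u\<in>{..<q}. ?F u (b u))"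
      by (rule MP.product_integrable_prod[OF finite_lessThan]) (rule i)
    then show ?thesis by (simp only: e)
  qed
  show "(\<integral>b. g (b s) * h (b t) \<partial>Pi\<^sub>M {..<q} Mt) = (\<integral>x. g x \<partial>Mt s) * (\<integral>x. h x \<partial>Mt t)"
  proof -
    have "(\<integral>b. (\<Prod>u\<in>{..<q}. ?F u (b u)) \<partial>Pi\<^sub>M {..<q} Mt) = (\<Prod>u\<in>{..<q}. integral\<^sup>L (Mt u) (?F u))"
      by (rule MP.product_integral_prod[OF finite_lessThan]) (rule i)
    then show ?thesis by (simp only: e e2)
  qed
qed


lemma BO: "bag_oracle D f q k = Pi\<^sub>M {..<q} Mt"
  by (simp add: bag_oracle_def Mt_def[abs_def])

lemma Mt_m: "(\<integral>x. x $ i \<partial>Mt t) = (if t < k then (\<integral>x. x $ i \<partial>cond_dist D f 1) else (\<integral>x. x $ i \<partial>cond_dist D f 0))"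
  by (simp add: Mt_def)
lemma Mt_s: "(\<integral>x. x $ i * x $ j \<partial>Mt t) = (if t < k then (\<integral>x. x $ i * x $ j \<partial>cond_dist D f 1) else (\<integral>x. x $ i * x $ j \<partial>cond_dist D f 0))"
  by (simp add: Mt_def)

lemma Mt_cov: "(\<integral>x. (x $ i - c) * (x $ j - d) \<partial>Mt t) =
   (\<integral>x. x $ i * x $ j \<partial>Mt t) - d * (\<integral>x. x $ i \<partial>Mt t) - c * (\<integral>x. x $ j \<partial>Mt t) + c * d"
proof -
  interpret prob_space "Mt t" by (rule Mt_prob)
  have i1: "integrable (Mt t) (\<lambda>x. x $ i)" "integrable (Mt t) (\<lambda>x. x $ j)"
    and i2: "integrable (Mt t) (\<lambda>x. x $ i * x $ j)" by (simp_all add: Mt_int D_int1 D_int2)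
  have "(\<lambda>x. (x $ i - c) * (x $ j - d)) = (\<lambda>x. x $ i * x $ j - d * x $ i - c * x $ j + c * d)"
    by (auto simp: fun_eq_iff algebra_simps)
  then show ?thesis using i1 i2 by (simp add: prob_space.prob_space[OF Mt_prob])
qed

lemma Mt_cov_int: "integrable (Mt t) (\<lambda>x. (x $ i - c) * (x $ j - d))"
proof -
  interpret prob_space "Mt t" by (rule Mt_prob)
  have i1: "integrable (Mt t) (\<lambda>x. x $ i)" "integrable (Mt t) (\<lambda>x. x $ j)"
    and i2: "integrable (Mt t) (\<lambda>x. x $ i * x $ j)" by (simp_all add: Mt_int D_int1 D_int2)
  have "(\<lambda>x. (x $ i - c) * (x $ j - d)) = (\<lambda>x. x $ i * x $ j - d * x $ i - c * x $ j + c * d)"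
    by (auto simp: fun_eq_iff algebra_simps)
  then show ?thesis using i1 i2 by simp
qed

lemma q0: "{..<q} \<noteq> {}" using q2 by (auto simp: lessThan_empty_iff)

lemma mean_B: "(\<integral>\<omega>. (case \<omega> of (b, t) \<Rightarrow> b t) $ i \<partial>(Pi\<^sub>M {..<q} Mt \<Otimes>\<^sub>M uniform_count_measure {..<q}))
   = (\<Sum>t<q. \<integral>x. x $ i \<partial>Mt t) / q"
proof -
  have "(\<integral>\<omega>. (case \<omega> of (b, t) \<Rightarrow> b t) $ i \<partial>(Pi\<^sub>M {..<q} Mt \<Otimes>\<^sub>M uniform_count_measure {..<q}))
     = (\<integral>\<omega>. (\<lambda>b t. b t $ i) (fst \<omega>) (snd \<omega>) \<partial>(Pi\<^sub>M {..<q} Mt \<Otimes>\<^sub>M uniform_count_measure {..<q}))"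
    by (simp add: case_prod_beta)
  also have "\<dots> = (\<Sum>t<q. \<integral>b. b t $ i \<partial>Pi\<^sub>M {..<q} Mt) / q"
    by (subst LU(2)[OF MP.P.prob_space_axioms finite_lessThan q0]) (auto intro!: E1(1)[OF _ Mt_int[OF D_int1]])
  also have "\<dots> = (\<Sum>t<q. \<integral>x. x $ i \<partial>Mt t) / q"
    by (intro arg_cong2[where f="(/)"] sum.cong refl E1(2)) (auto intro: Mt_int D_int1)
  finally show ?thesis .
qed

lemma SigB: "Sigma_B D f q k $ i $ j =
  (\<Sum>t<q. (\<integral>x. x $ i * x $ j \<partial>Mt t) - ((\<Sum>t<q. \<integral>x. x $ j \<partial>Mt t) / q) * (\<integral>x. x $ i \<partial>Mt t)
     - ((\<Sum>t<q. \<integral>x. x $ i \<partial>Mt t) / q) * (\<integral>x. x $ j \<partial>Mt t)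
     + ((\<Sum>t<q. \<integral>x. x $ i \<partial>Mt t) / q) * ((\<Sum>t<q. \<integral>x. x $ j \<partial>Mt t) / q)) / q"
proof -
  define c where "c = (\<Sum>t<q. \<integral>x. x $ i \<partial>Mt t) / q"
  define d where "d = (\<Sum>t<q. \<integral>x. x $ j \<partial>Mt t) / q"
  have "Sigma_B D f q k $ i $ j = (\<integral>\<omega>. ((case \<omega> of (b, t) \<Rightarrow> b t) $ i - c) * ((case \<omega> of (b, t) \<Rightarrow> b t) $ j - d)
      \<partial>(Pi\<^sub>M {..<q} Mt \<Otimes>\<^sub>M uniform_count_measure {..<q}))"
    unfolding Sigma_B_def bag_point_space_def BO Let_def c_def d_def mean_B by simp
  also have "\<dots> = (\<integral>\<omega>. (\<lambda>b t. (b t $ i - c) * (b t $ j - d)) (fst \<omega>) (snd \<omega>)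
      \<partial>(Pi\<^sub>M {..<q} Mt \<Otimes>\<^sub>M uniform_count_measure {..<q}))"
    by (simp add: case_prod_beta)
  also have "\<dots> = (\<Sum>t<q. \<integral>b. (b t $ i - c) * (b t $ j - d) \<partial>Pi\<^sub>M {..<q} Mt) / q"
    by (subst LU(2)[OF MP.P.prob_space_axioms finite_lessThan q0])
       (auto intro: E1(1)[where g="\<lambda>x. (x $ i - c) * (x $ j - d)", simplified] Mt_cov_int)
  also have "\<dots> = (\<Sum>t<q. (\<integral>x. x $ i * x $ j \<partial>Mt t) - d * (\<integral>x. x $ i \<partial>Mt t) - c * (\<integral>x. x $ j \<partial>Mt t) + c * d) / q"
    apply (intro arg_cong2[where f="(/)"] sum.cong refl)
    apply (subst E1(2)[where g="\<lambda>x. (x $ i - c) * (x $ j - d)", simplified])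
    by (auto intro: Mt_cov_int simp: Mt_cov)
  finally show ?thesis unfolding c_def d_def .
qed


abbreviation "PP \<equiv> {(s, t). s < q \<and> t < q \<and> s \<noteq> t}"

lemma P_eq: "PP = Sigma {..<q} (\<lambda>s. {..<q} - {s})" by auto
lemma P_fin: "finite PP" unfolding P_eq by auto
lemma P_ne: "PP \<noteq> {}" proof - have "(0, 1) \<in> PP" using q2 by auto then show ?thesis by blast qed
lemma P_card: "real (card PP) = real q * (real q - 1)"
proof -
  have "card PP = (\<Sum>s<q. card ({..<q} - {s}))" unfolding P_eq by (subst card_SigmaI) auto
  also have "\<dots> = (\<Sum>s<q. q - 1)" by (intro sum.cong) auto
  finally show ?thesis using q2 by (simp add: of_nat_diff)
qed
lemma sumP: "(\<Sum>p\<in>PP. F (fst p) (snd p)) = (\<Sum>s<q. \<Sum>t\<in>{..<q} - {s}. F s t)"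
  unfolding P_eq by (subst sum.Sigma) (auto simp: case_prod_beta)

lemma pairint:
  assumes "s < q" "t < q" "s \<noteq> t"
  shows "integrable (Pi\<^sub>M {..<q} Mt) (\<lambda>b. (b s $ i - b t $ i) * (b s $ j - b t $ j))"
    and "(\<integral>b. (b s $ i - b t $ i) * (b s $ j - b t $ j) \<partial>Pi\<^sub>M {..<q} Mt) =
      (\<integral>x. x $ i * x $ j \<partial>Mt s) + (\<integral>x. x $ i * x $ j \<partial>Mt t)
      - (\<integral>x. x $ i \<partial>Mt s) * (\<integral>x. x $ j \<partial>Mt t) - (\<integral>x. x $ i \<partial>Mt t) * (\<integral>x. x $ j \<partial>Mt s)"
proof -
  have e: "(\<lambda>b::nat \<Rightarrow> real^'d. (b s $ i - b t $ i) * (b s $ j - b t $ j)) =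
    (\<lambda>b. b s $ i * b s $ j - b s $ i * b t $ j - b t $ i * b s $ j + b t $ i * b t $ j)"
    by (rule ext) argo
  have a: "integrable (Pi\<^sub>M {..<q} Mt) (\<lambda>b. b s $ i * b s $ j)"
    "(\<integral>b. b s $ i * b s $ j \<partial>Pi\<^sub>M {..<q} Mt) = (\<integral>x. x $ i * x $ j \<partial>Mt s)"
    using E1[of s "\<lambda>x. x $ i * x $ j"] assms by (auto intro: Mt_int D_int2)
  have b: "integrable (Pi\<^sub>M {..<q} Mt) (\<lambda>b. b t $ i * b t $ j)"
    "(\<integral>b. b t $ i * b t $ j \<partial>Pi\<^sub>M {..<q} Mt) = (\<integral>x. x $ i * x $ j \<partial>Mt t)"
    using E1[of t "\<lambda>x. x $ i * x $ j"] assms by (auto intro: Mt_int D_int2)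
  have c: "integrable (Pi\<^sub>M {..<q} Mt) (\<lambda>b. b s $ i * b t $ j)"
    "(\<integral>b. b s $ i * b t $ j \<partial>Pi\<^sub>M {..<q} Mt) = (\<integral>x. x $ i \<partial>Mt s) * (\<integral>x. x $ j \<partial>Mt t)"
    using E2[of s t "\<lambda>x. x $ i" "\<lambda>x. x $ j"] assms by (auto intro: Mt_int D_int1)
  have d: "integrable (Pi\<^sub>M {..<q} Mt) (\<lambda>b. b t $ i * b s $ j)"
    "(\<integral>b. b t $ i * b s $ j \<partial>Pi\<^sub>M {..<q} Mt) = (\<integral>x. x $ i \<partial>Mt t) * (\<integral>x. x $ j \<partial>Mt s)"
    using E2[of t s "\<lambda>x. x $ i" "\<lambda>x. x $ j"] assms by (auto intro: Mt_int D_int1)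
  show "integrable (Pi\<^sub>M {..<q} Mt) (\<lambda>b. (b s $ i - b t $ i) * (b s $ j - b t $ j))"
    unfolding e using a b c d by simp
  show "(\<integral>b. (b s $ i - b t $ i) * (b s $ j - b t $ j) \<partial>Pi\<^sub>M {..<q} Mt) =
      (\<integral>x. x $ i * x $ j \<partial>Mt s) + (\<integral>x. x $ i * x $ j \<partial>Mt t)
      - (\<integral>x. x $ i \<partial>Mt s) * (\<integral>x. x $ j \<partial>Mt t) - (\<integral>x. x $ i \<partial>Mt t) * (\<integral>x. x $ j \<partial>Mt s)"
    unfolding e using a b c d by simp
qed

lemma SigD: "Sigma_D D f q k $ i $ j =
  (\<Sum>s<q. \<Sum>t\<in>{..<q} - {s}. (\<integral>x. x $ i * x $ j \<partial>Mt s) + (\<integral>x. x $ i * x $ j \<partial>Mt t)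
      - (\<integral>x. x $ i \<partial>Mt s) * (\<integral>x. x $ j \<partial>Mt t) - (\<integral>x. x $ i \<partial>Mt t) * (\<integral>x. x $ j \<partial>Mt s))
   / (real q * (real q - 1))"
proof -
  let ?G = "\<lambda>b p. (b (fst p) $ i - b (snd p) $ i) * (b (fst p) $ j - b (snd p) $ j)"
  have "Sigma_D D f q k $ i $ j = (\<integral>\<omega>. ?G (fst \<omega>) (snd \<omega>) \<partial>(Pi\<^sub>M {..<q} Mt \<Otimes>\<^sub>M uniform_count_measure PP))"
    unfolding Sigma_D_def bag_pair_space_def BO Let_def by (simp add: case_prod_beta)
  also have "\<dots> = (\<Sum>p\<in>PP. \<integral>b. ?G b p \<partial>Pi\<^sub>M {..<q} Mt) / card PP"
    by (rule LU(2)[OF MP.P.prob_space_axioms P_fin P_ne]) (auto intro: pairint(1))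
  also have "(\<Sum>p\<in>PP. \<integral>b. ?G b p \<partial>Pi\<^sub>M {..<q} Mt) = (\<Sum>s<q. \<Sum>t\<in>{..<q} - {s}. \<integral>b. ?G b (s, t) \<partial>Pi\<^sub>M {..<q} Mt)"
    using sumP[of "\<lambda>s t. \<integral>b. ?G b (s, t) \<partial>Pi\<^sub>M {..<q} Mt"] by simp
  also have "\<dots> = (\<Sum>s<q. \<Sum>t\<in>{..<q} - {s}. (\<integral>x. x $ i * x $ j \<partial>Mt s) + (\<integral>x. x $ i * x $ j \<partial>Mt t)
      - (\<integral>x. x $ i \<partial>Mt s) * (\<integral>x. x $ j \<partial>Mt t) - (\<integral>x. x $ i \<partial>Mt t) * (\<integral>x. x $ j \<partial>Mt s))"
    by (intro sum.cong refl) (auto simp: pairint(2))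
  finally show ?thesis by (simp add: P_card)
qed


lemma main: "Sigma_D D f q k =
    2 *\<^sub>R Sigma_B D f q k
    + ((2 / (real q - 1)) * (real k / real q) * (1 - real k / real q)) *\<^sub>R
        outer (cond_mean D f 1 - cond_mean D f 0) (cond_mean D f 1 - cond_mean D f 0)"
  unfolding vec_eq_iff
proof (intro allI)
  fix i j
  let ?S1 = "\<integral>x. x $ i * x $ j \<partial>cond_dist D f 1" and ?S0 = "\<integral>x. x $ i * x $ j \<partial>cond_dist D f 0"
  let ?a1 = "\<integral>x. x $ i \<partial>cond_dist D f 1" and ?a0 = "\<integral>x. x $ i \<partial>cond_dist D f 0"
  let ?b1 = "\<integral>x. x $ j \<partial>cond_dist D f 1" and ?b0 = "\<integral>x. x $ j \<partial>cond_dist D f 0"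
  note A = alg[OF q2 k1 kq, of ?S1 ?S0 ?a1 ?a0 ?b1 ?b0]
  show "Sigma_D D f q k $ i $ j = (2 *\<^sub>R Sigma_B D f q k
    + ((2 / (real q - 1)) * (real k / real q) * (1 - real k / real q)) *\<^sub>R
        outer (cond_mean D f 1 - cond_mean D f 0) (cond_mean D f 1 - cond_mean D f 0)) $ i $ j"
    unfolding SigD SigB Mt_m Mt_s vector_add_component vector_scaleR_component outer_def
      vec_lambda_beta vector_minus_component cond_mean_def real_scaleR_def
    by (rule A)
qed

end

theorem lemma9:
  fixes D :: "(real^'d) measure" and f :: "real^'d \<Rightarrow> nat" and q k :: nat
  assumes "prob_space D" and "sets D = sets borel"
    and "\<And>i. integrable D (\<lambda>x. (x $ i)\<^sup>2)"
    and "\<And>x. f x \<in> {0, 1}"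
    and "\<And>a. {x \<in> space D. f x = a} \<in> sets D"
    and "\<And>a. a \<in> {0, 1} \<Longrightarrow> measure D {x \<in> space D. f x = a} > 0"
    and "q \<ge> 2" and "1 \<le> k" and "k \<le> q - 1"
  shows "Sigma_D D f q k =
    2 *\<^sub>R Sigma_B D f q k
    + ((2 / (real q - 1)) * (real k / real q) * (1 - real k / real q)) *\<^sub>R
        outer (cond_mean D f 1 - cond_mean D f 0) (cond_mean D f 1 - cond_mean D f 0)"
proof -
  interpret L9 D f q k
    by (rule L9.intro) (use assms in auto)
  show ?thesis by (rule main)
qed

end
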